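(* Let $n \ge s \ge 4$ be integers, let $p$ be an odd prime and let $0 \le j < p$ be an integer. Let \[ F_p(x) = \sum_{k=0}^{s-1} \binom{n}{k+1} G_{k+1}\, p^k\, x^{s-1-k}. \] Then \[ |F_p(j)| \le 3\,(np/\pi)^{s+1}. \]
   Context: The Bernoulli numbers $B_k$ are defined by $\frac{t}{e^t-1} = \sum_{k\ge 0} \frac{B_k}{k!} t^k$, and the Genocchi numbers by $G_k = 2(1-2^k)B_k$. Here $0^0 = 1$. *)

theory Defs
  imports "HOL-Analysis.Analysis" "HOL-Computational_Algebra.Formal_Power_Series"
begin

definition bernoulli :: "nat \<Rightarrow> real" where
  "bernoulli k = fact k * fps_nth (fps_X / (fps_exp 1 - 1)) k"

definition genocchi :: "nat \<Rightarrow> real" where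
  "genocchi k = 2 * (1 - 2 ^ k) * bernoulli k"

definition F_poly :: "nat \<Rightarrow> nat \<Rightarrow> nat \<Rightarrow> real \<Rightarrow> real" where
  "F_poly n s p x = (\<Sum>k = 0..s-1. real (n choose (k+1)) * genocchi (k+1) * real p ^ k * x ^ (s-1-k))"


end

theory Submission
  imports Defs
begin


definition BA :: "real fps" where "BA = fps_X / (fps_exp 1 - 1)"
abbreviation ba :: "nat \<Rightarrow> real" where "ba k \<equiv> fps_nth BA k"

lemma E1_nz: "(fps_exp 1 - 1 :: real fps) \<noteq> 0"
proof
  assume "(fps_exp 1 - 1 :: real fps) = 0"
  hence "fps_nth (fps_exp 1 - 1 :: real fps) 1 = 0" by simp
  thus False by simp
qed

lemma E1_subdeg: "subdegree (fps_exp 1 - 1 :: real fps) = 1"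
  by (rule subdegreeI) auto

lemma BA_mult: "BA * (fps_exp 1 - 1) = fps_X"
  unfolding BA_def
  by (rule fps_times_divide_eq) (use E1_nz E1_subdeg in auto)

lemma bernoulli_BA: "bernoulli k = fact k * ba k"
  by (simp add: bernoulli_def BA_def)

lemma ba0: "ba 0 = 1"
proof -
  have "fps_nth (BA * (fps_exp 1 - 1)) 1 = 1" by (simp add: BA_mult)
  thus ?thesis by (simp add: fps_mult_nth_1)
qed

lemma BA_ode: "fps_X * fps_deriv BA = BA - fps_X * BA - BA * BA"
proof -
  define e where "e = (fps_exp 1 - 1 :: real fps)"
  have m: "BA * e = fps_X" using BA_mult by (simp add: e_def)
  have "fps_deriv (BA * e) = 1" using m by simp
  hence D: "fps_deriv BA * e + BA * (e + 1) = 1" by (simp add: e_def algebra_simps)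
  have "(fps_X * fps_deriv BA) * e = (BA - fps_X * BA - BA * BA) * e"
  proof -
    have "(fps_X * fps_deriv BA) * e = fps_X * (1 - BA * (e+1))"
      using D by (metis add_diff_cancel_right' mult.assoc)
    also have "\<dots> = (BA - fps_X * BA - BA * BA) * e"
      using m by (simp add: algebra_simps)
    finally show ?thesis .
  qed
  moreover have "e \<noteq> 0" using E1_nz by (simp add: e_def)
  ultimately show ?thesis by simp
qed

lemma ba_rec: "k \<ge> 1 \<Longrightarrow> real k * ba k = ba k - ba (k - 1) - (\<Sum>i=0..k. ba i * ba (k - i))"
proof -
  assume k: "k \<ge> 1"
  have "fps_nth (fps_X * fps_deriv BA) k = fps_nth (BA - fps_X * BA - BA * BA) k"
    using BA_ode by simp
  moreover have "fps_nth (BA * BA) k = (\<Sum>i=0..k. ba i * ba (k - i))" by (rule fps_mult_nth)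
  ultimately show ?thesis using k by (simp del: fps_mult_nth)
qed

lemma ba1: "ba 1 = -1/2"
  using ba_rec[of 1] ba0 by simp

lemma BA_parity: "fps_compose BA (-fps_X) = BA + fps_X"
proof -
  define E where "E = (fps_exp 1 :: real fps)"
  define E' where "E' = (fps_exp (-1) :: real fps)"
  have EE: "E' * E = 1" unfolding E_def E'_def
    by (metis add.commute add.right_inverse fps_exp_0 fps_exp_add_mult)
  have cE: "fps_compose (E - 1) (-fps_X) = E' - 1"
    by (simp add: fps_compose_uminus' E_def E'_def fps_eq_iff power_minus' field_simps)
  have "fps_compose (BA * (E - 1)) (-fps_X) = fps_compose fps_X (-fps_X)"
    using BA_mult by (simp add: E_def)
  hence 1: "fps_compose BA (-fps_X) * (E' - 1) = - fps_X"
    by (simp add: fps_compose_mult_distrib cE[symmetric])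
  have "(BA + fps_X) * (E' - 1) * E = - fps_X * E"
  proof -
    have e1: "(E' - 1) * E = 1 - E" using EE by (simp add: left_diff_distrib)
    have "(BA + fps_X) * (E' - 1) * E = (BA + fps_X) * ((E' - 1) * E)" by (simp only: mult.assoc)
    also have "\<dots> = (BA + fps_X) * (1 - E)" by (simp only: e1)
    also have "\<dots> = - (BA * (E - 1)) - fps_X * (E - 1)" by (simp add: algebra_simps)
    also have "\<dots> = - fps_X * E" using BA_mult by (simp add: E_def algebra_simps)
    finally show ?thesis .
  qed
  moreover have "E \<noteq> 0" using EE by auto
  ultimately have 2: "(BA + fps_X) * (E' - 1) = - fps_X"
    by (metis mult_right_cancel mult_minus_left)
  have "E' - 1 \<noteq> 0"
  proof
    assume "E' - 1 = 0"
    hence "fps_nth (E' - 1) 1 = 0" by simp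
    thus False by (simp add: E'_def)
  qed
  with 1 2 show ?thesis by (metis mult_right_cancel)
qed

lemma ba_odd: "odd k \<Longrightarrow> k \<noteq> 1 \<Longrightarrow> ba k = 0"
proof -
  assume k: "odd k" "k \<noteq> 1"
  have "fps_nth (fps_compose BA (-fps_X)) k = fps_nth (BA + fps_X) k"
    using BA_parity by simp
  hence "(-1)^k * ba k = ba k" using k by (simp add: fps_compose_uminus')
  thus ?thesis using k by simp
qed


lemma sum_even_odd: "sum (f::nat\<Rightarrow>real) {0..2*m} = (\<Sum>j=0..m. f (2*j)) + (\<Sum>j<m. f (2*j+1))"
proof (induction m)
  case 0 then show ?case by simp
next
  case (Suc m)
  have "{0..2*Suc m} = insert (2*m+2) (insert (2*m+1) {0..2*m})" by auto
  hence "sum f {0..2*Suc m} = f (2*m+2) + f (2*m+1) + sum f {0..2*m}" by simp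
  then show ?case using Suc by (simp add: add.commute add.left_commute)
qed

lemma ba_even_rec:
  assumes m: "m \<ge> 1"
  shows "real (2*m+1) * ba (2*m) = (if m = 1 then 1/4 else 0) - (\<Sum>j=1..m-1. ba (2*j) * ba (2*(m-j)))"
proof -
  have r: "real (2*m) * ba (2*m) = ba (2*m) - ba (2*m - 1) - (\<Sum>i=0..2*m. ba i * ba (2*m - i))"
    using ba_rec[of "2*m"] m by simp
  have S: "(\<Sum>i=0..2*m. ba i * ba (2*m - i)) = (\<Sum>j=0..m. ba (2*j) * ba (2*m - 2*j)) + (\<Sum>j<m. ba (2*j+1) * ba (2*m - (2*j+1)))"
    by (rule sum_even_odd)
  have ev: "(\<Sum>j=0..m. ba (2*j) * ba (2*m - 2*j)) = 2 * ba (2*m) + (\<Sum>j=1..m-1. ba (2*j) * ba (2*(m-j)))"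
  proof -
    have "{0..m} = insert 0 (insert m {1..m-1})" using m by auto
    hence "(\<Sum>j=0..m. ba (2*j) * ba (2*m - 2*j)) = ba 0 * ba (2*m) + (ba (2*m) * ba 0 + (\<Sum>j=1..m-1. ba (2*j) * ba (2*m - 2*j)))"
      using m by simp
    also have "(\<Sum>j=1..m-1. ba (2*j) * ba (2*m - 2*j)) = (\<Sum>j=1..m-1. ba (2*j) * ba (2*(m-j)))"
      by (simp add: diff_mult_distrib2)
    finally show ?thesis using ba0 by simp
  qed
  show ?thesis
  proof (cases "m = 1")
    case True
    have o: "(\<Sum>j<m. ba (2*j+1) * ba (2*m - (2*j+1))) = 1/4" using True ba1 by simp
    show ?thesis using r S ev o True ba1 ba0 by (simp add: algebra_simps)
  next
    case False
    hence m2: "m \<ge> 2" using m by simp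
    have z1: "ba (2*m - 1) = 0" using m2 by (intro ba_odd) auto
    have o: "(\<Sum>j<m. ba (2*j+1) * ba (2*m - (2*j+1))) = 0"
    proof (intro sum.neutral ballI)
      fix j assume j: "j \<in> {..<m}"
      show "ba (2*j+1) * ba (2*m - (2*j+1)) = 0"
      proof (cases "j = 0")
        case True thus ?thesis using z1 by simp
      next
        case False thus ?thesis by (simp add: ba_odd)
      qed
    qed
    show ?thesis using r S ev o False z1 by (simp add: algebra_simps)
  qed
qed

definition bb :: "nat \<Rightarrow> real" where "bb m = (-1)^(m+1) * ba (2*m)"

lemma bb_rec:
  assumes m: "m \<ge> 1"
  shows "real (2*m+1) * bb m = (if m = 1 then 1/4 else 0) + (\<Sum>j=1..m-1. bb j * bb (m-j))"
proof -
  have "(\<Sum>j=1..m-1. bb j * bb (m-j)) = (\<Sum>j=1..m-1. (-1)^m * (ba (2*j) * ba (2*(m-j))))"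
  proof (intro sum.cong refl)
    fix j assume j: "j \<in> {1..m-1}"
    hence "(-1::real)^(j+1) * (-1)^(m-j+1) = (-1)^m"
    proof -
      have "(j+1) + (m-j+1) = m + 2" using j by auto
      hence "(-1::real)^(j+1) * (-1)^(m-j+1) = (-1)^(m+2)" by (metis power_add)
      thus ?thesis by simp
    qed
    thus "bb j * bb (m-j) = (-1)^m * (ba (2*j) * ba (2*(m-j)))"
      unfolding bb_def by (metis (no_types, lifting) mult.assoc mult.left_commute)
  qed
  also have "\<dots> = (-1)^m * (\<Sum>j=1..m-1. ba (2*j) * ba (2*(m-j)))" by (simp add: sum_distrib_left)
  finally have e: "(\<Sum>j=1..m-1. bb j * bb (m-j)) = (-1)^m * (\<Sum>j=1..m-1. ba (2*j) * ba (2*(m-j)))" .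
  have "real (2*m+1) * bb m = (-1)^(m+1) * (real (2*m+1) * ba (2*m))" by (simp add: bb_def)
  also have "\<dots> = (-1)^(m+1) * ((if m = 1 then 1/4 else 0) - (\<Sum>j=1..m-1. ba (2*j) * ba (2*(m-j))))"
    using ba_even_rec[OF m] by simp
  also have "\<dots> = (if m = 1 then 1/4 else 0) + (\<Sum>j=1..m-1. bb j * bb (m-j))"
    unfolding e by (auto simp: algebra_simps)
  finally show ?thesis .
qed

lemma bb_pos: "m \<ge> 1 \<Longrightarrow> bb m > 0"
proof (induction m rule: less_induct)
  case (less m)
  have "(\<Sum>j=1..m-1. bb j * bb (m-j)) \<ge> 0"
    by (intro sum_nonneg) (auto intro!: mult_nonneg_nonneg less_imp_le[OF less.IH])
  hence "real (2*m+1) * bb m > 0"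
  proof (cases "m = 1")
    case True thus ?thesis using bb_rec[of 1] by simp
  next
    case False
    hence "m \<ge> 2" using less.prems by simp
    hence "bb 1 * bb (m-1) > 0" using less.IH[of 1] less.IH[of "m-1"] by auto
    moreover have "(\<Sum>j=1..m-1. bb j * bb (m-j)) \<ge> bb 1 * bb (m-1)"
      using \<open>m \<ge> 2\<close>
      by (intro member_le_sum) (auto intro!: mult_nonneg_nonneg less_imp_le[OF less.IH])
    ultimately show ?thesis using bb_rec[OF less.prems] False by simp
  qed
  thus ?case by (simp add: zero_less_mult_iff)
qed

lemma abs_ba_even: "m \<ge> 1 \<Longrightarrow> \<bar>ba (2*m)\<bar> = bb m"
proof -
  assume m: "m \<ge> 1"
  have "\<bar>bb m\<bar> = \<bar>ba (2*m)\<bar>" unfolding bb_def by (simp add: abs_mult)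
  thus ?thesis using bb_pos[OF m] by simp
qed


lemma tcos_le_sin: assumes "0 \<le> t" "t \<le> pi/2" shows "t * cos t \<le> sin t"
proof -
  define f where "f u = sin u - u * cos u" for u :: real
  have d: "(f has_real_derivative (u * sin u)) (at u)" for u
    unfolding f_def by (auto intro!: derivative_eq_intros simp: algebra_simps)
  have "f 0 \<le> f t"
  proof (rule DERIV_nonneg_imp_nondecreasing[OF assms(1)])
    fix u assume u: "0 \<le> u" "u \<le> t"
    have "u * sin u \<ge> 0" using u assms by (intro mult_nonneg_nonneg sin_ge_zero) auto
    thus "\<exists>y. (f has_real_derivative y) (at u) \<and> 0 \<le> y" using d by blast
  qed
  thus ?thesis by (simp add: f_def)
qed

lemma cross:
  fixes D :: "real \<Rightarrow> real"
  assumes ab: "a < b" and cont: "continuous_on {a..b} D" and Da: "D a > 0"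
    and der: "\<And>y. a < y \<Longrightarrow> y \<le> b \<Longrightarrow> D y = 0 \<Longrightarrow> \<exists>d>0. (D has_real_derivative d) (at y)"
  shows "D b > 0"
proof (rule ccontr)
  assume "\<not> D b > 0"
  hence Db: "D b \<le> 0" by simp
  define S where "S = {a..b} \<inter> D -` {..0}"
  have cS: "closed S" unfolding S_def by (intro continuous_closed_preimage cont) auto
  have bS: "bounded S" unfolding S_def by (intro bounded_Int) auto
  have kS: "compact S" using cS bS compact_eq_bounded_closed by blast
  have "b \<in> S" using Db ab unfolding S_def by auto
  hence neS: "S \<noteq> {}" by auto
  obtain y0 where y0: "y0 \<in> S" and miny: "\<And>y. y \<in> S \<Longrightarrow> y0 \<le> y"
    using compact_attains_inf[OF kS neS] by blast
  have y0ab: "a \<le> y0" "y0 \<le> b" "D y0 \<le> 0" using y0 unfolding S_def by auto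
  have "y0 \<noteq> a" using y0ab Da by auto
  hence ay0: "a < y0" using y0ab by simp
  have Dy0: "D y0 = 0"
  proof (rule ccontr)
    assume "D y0 \<noteq> 0"
    hence "D y0 < 0" using y0ab by simp
    have "continuous_on {a..y0} D" using y0ab by (intro continuous_on_subset[OF cont]) auto
    from IVT2'[of D y0 0 a, OF _ _ _ this] obtain z where z: "a \<le> z" "z \<le> y0" "D z = 0"
      using \<open>D y0 < 0\<close> Da ay0 by auto
    hence "z \<in> S" using y0ab unfolding S_def by auto
    hence "y0 \<le> z" by (rule miny)
    thus False using z \<open>D y0 < 0\<close> by simp
  qed
  obtain d where d: "d > 0" "(D has_real_derivative d) (at y0)" using der[OF ay0 y0ab(2) Dy0] by blast
  from DERIV_pos_inc_left[OF d(2) d(1)] obtain e where e: "e > 0" "\<And>h. h > 0 \<Longrightarrow> h < e \<Longrightarrow> D (y0 - h) < D y0"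
    by blast
  define h where "h = min e (y0 - a) / 2"
  have h: "h > 0" "h < e" "h < y0 - a" using e ay0 unfolding h_def by auto
  have "D (y0 - h) < 0" using e(2)[OF h(1,2)] Dy0 by simp
  hence "y0 - h \<in> S" using h y0ab unfolding S_def by auto
  hence "y0 \<le> y0 - h" by (rule miny)
  thus False using h by simp
qed


definition HH :: "real \<Rightarrow> real" where "HH x = 1 - x * cos (x/2) / (2 * sin (x/2))"
definition HH' :: "real \<Rightarrow> real" where "HH' x = (x - 2 * sin (x/2) * cos (x/2)) / (4 * sin (x/2)^2)"

lemma HH_deriv: assumes "sin (x/2) \<noteq> 0" shows "(HH has_real_derivative HH' x) (at x)"
proof -
  have "((\<lambda>x. 1 - x * cos (x/2) / (2 * sin (x/2))) has_real_derivative
     (- (((1 * cos (x/2) + x * (- sin (x/2) * (1/2))) * (2 * sin (x/2)) - x * cos (x/2) * (2 * (cos (x/2) * (1/2)))) / (2 * sin (x/2))^2))) (at x)"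
    using assms by (auto intro!: derivative_eq_intros simp: power2_eq_square)
  moreover have "(- (((1 * cos (x/2) + x * (- sin (x/2) * (1/2))) * (2 * sin (x/2)) - x * cos (x/2) * (2 * (cos (x/2) * (1/2)))) / (2 * sin (x/2))^2)) = HH' x"
  proof -
    have sc: "sin (x/2)^2 + cos (x/2)^2 = 1" by simp
    obtain sn cs where sd: "sn = sin (x/2)" "cs = cos (x/2)" by blast
    have sc': "sn * sn + cs * cs = 1" using sc sd by (simp add: power2_eq_square)
    have "x * (8 * (cs * (cs * (sn * sn)))) + x * (8 * (sn * (sn * (sn * sn)))) = x * (8 * (sn * sn))"
      using sc' by algebra
    thus ?thesis unfolding HH'_def using assms sd
      by (simp add: field_simps power2_eq_square)
  qed
  ultimately show ?thesis unfolding HH_def[abs_def] by simp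
qed

lemma HH_ode: assumes "sin (x/2) \<noteq> 0" shows "x * HH' x = HH x ^ 2 - HH x + x^2/4"
proof -
  have sc: "sin (x/2)^2 + cos (x/2)^2 = 1" by simp
  obtain sn cs where sd: "sn = sin (x/2)" "cs = cos (x/2)" by blast
  have sc': "sn * sn + cs * cs = 1" using sc sd by (simp add: power2_eq_square)
  have "x * (x * (2 * sn)) = x * (x * (2 * (cs * (cs * sn)))) + x * (x * (2 * (sn * (sn * sn))))"
    using sc' by algebra
  thus ?thesis unfolding HH_def HH'_def using assms sd
    by (simp add: field_simps power2_eq_square)
qed

lemma HH_nonneg: assumes "0 < x" "x \<le> pi" shows "HH x \<ge> 0"
proof -
  have s: "sin (x/2) > 0" using assms by (intro sin_gt_zero) auto
  have "(x/2) * cos (x/2) \<le> sin (x/2)" using assms by (intro tcos_le_sin) auto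
  hence "x * cos (x/2) / (2 * sin (x/2)) \<le> 1" using s by (simp add: field_simps)
  thus ?thesis unfolding HH_def by simp
qed

lemma HH_small: assumes "0 < x" "x \<le> 2" shows "HH x < 1/2"
proof -
  have pi3: "pi > 3" by (rule pi_gt3)
  have s: "sin (x/2) > 0" using assms pi3 by (intro sin_gt_zero) auto
  have sl: "sin (x/2) \<le> x/2" using assms by (intro sin_x_le_x) auto
  have "cos (x/2) > cos (pi/3)" using assms pi3 by (intro cos_monotone_0_pi) auto
  hence c: "cos (x/2) > 1/2" by (simp add: cos_60)
  have "x * cos (x/2) / (2 * sin (x/2)) \<ge> cos (x/2)"
  proof -
    have "cos (x/2) * (2 * sin (x/2)) \<le> cos (x/2) * x" using sl c by (intro mult_left_mono) auto
    thus ?thesis using s by (simp add: field_simps)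
  qed
  thus ?thesis unfolding HH_def using c by linarith
qed

lemma HH_end: assumes "0 < e" "e \<le> 1/2" shows "HH (2*pi*(1-e)) \<le> 1/e"
proof -
  have hx: "2*pi*(1-e)/2 = pi - pi*e" by (simp add: field_simps)
  have s: "sin (pi*e) > 0" using assms by (intro sin_gt_zero) (auto simp: pi_gt_zero)
  have tc: "(pi*e) * cos (pi*e) \<le> sin (pi*e)" using assms by (intro tcos_le_sin) auto
  have "HH (2*pi*(1-e)) = 1 + 2*pi*(1-e) * cos (pi*e) / (2 * sin (pi*e))"
  proof -
    have "cos (pi - pi*e) = - cos (pi*e)" "sin (pi - pi*e) = sin (pi*e)" by (simp_all add: cos_diff sin_diff)
    thus ?thesis unfolding HH_def hx by simp
  qed
  also have "\<dots> = 1 + (1-e) * ((pi*e) * cos (pi*e) / sin (pi*e)) / e"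
    using assms s by (simp add: field_simps)
  also have "\<dots> \<le> 1 + (1-e) * 1 / e"
  proof -
    have "(pi*e) * cos (pi*e) / sin (pi*e) \<le> 1" using tc s by (simp add: field_simps)
    hence "(1-e) * ((pi*e) * cos (pi*e) / sin (pi*e)) \<le> (1-e) * 1" using assms by (intro mult_left_mono) auto
    thus ?thesis using assms by (intro add_left_mono divide_right_mono) auto
  qed
  also have "\<dots> = 1/e" using assms by (simp add: field_simps)
  finally show ?thesis .
qed


definition PP :: "(nat \<Rightarrow> real) \<Rightarrow> nat \<Rightarrow> real \<Rightarrow> real" where
  "PP c M x = (\<Sum>m=1..M. c m * x^(2*m))"
definition PP' :: "(nat \<Rightarrow> real) \<Rightarrow> nat \<Rightarrow> real \<Rightarrow> real" where
  "PP' c M x = (\<Sum>m=1..M. c m * (real (2*m) * x^(2*m-1)))"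

lemma PP_deriv: "(PP c M has_real_derivative PP' c M x) (at x)"
  unfolding PP_def[abs_def] PP'_def
  by (intro DERIV_sum DERIV_cmult) (auto intro!: derivative_eq_intros)

lemma PP_xderiv: "x * PP' c M x + PP c M x = (\<Sum>m=1..M. real (2*m+1) * c m * x^(2*m))"
proof -
  have "x * PP' c M x + PP c M x = (\<Sum>m=1..M. x * (c m * (real (2*m) * x^(2*m-1))) + c m * x^(2*m))"
    unfolding PP'_def PP_def by (simp add: sum_distrib_left sum.distrib)
  also have "\<dots> = (\<Sum>m=1..M. real (2*m+1) * c m * x^(2*m))"
  proof (intro sum.cong refl)
    fix m assume m: "m \<in> {1..M}"
    have e: "Suc (2*m-1) = 2*m" using m by auto
    have xx: "x * x^(2*m-1) = x^(2*m)" by (subst e[symmetric], subst power_Suc, rule refl)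
    have "x * (c m * (real (2*m) * x^(2*m-1))) + c m * x^(2*m) = c m * real (2*m) * (x * x^(2*m-1)) + c m * x^(2*m)"
      by (simp only: mult_ac)
    also have "\<dots> = real (2*m+1) * c m * x^(2*m)" unfolding xx by (simp add: algebra_simps)
    finally show "x * (c m * (real (2*m) * x^(2*m-1))) + c m * x^(2*m) = real (2*m+1) * c m * x^(2*m)" .
  qed
  finally show ?thesis .
qed

lemma triangle_bound:
  fixes u :: "nat \<Rightarrow> real"
  assumes u: "\<And>j. j \<ge> 1 \<Longrightarrow> u j \<ge> 0"
  shows "(\<Sum>m=1..M. \<Sum>j=1..m-1. u j * u (m-j)) \<le> (\<Sum>j=1..M-1. u j)^2"
proof -
  define A where "A = {(j,l). 1 \<le> j \<and> 1 \<le> l \<and> j + l \<le> M}"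
  have "(\<Sum>m=1..M. \<Sum>j=1..m-1. u j * u (m-j)) = (\<Sum>(m,j)\<in>Sigma {1..M} (\<lambda>m. {1..m-1}). u j * u (m-j))"
    by (rule sum.Sigma) auto
  also have "\<dots> = (\<Sum>(j,l)\<in>A. u j * u l)"
    by (rule sum.reindex_bij_witness[where i="\<lambda>(j,l). (j+l, j)" and j="\<lambda>(m,j). (j, m-j)"])
       (auto simp: A_def)
  also have "\<dots> \<le> (\<Sum>(j,l)\<in>{1..M-1}\<times>{1..M-1}. u j * u l)"
    by (rule sum_mono2) (auto simp: A_def intro!: mult_nonneg_nonneg u)
  also have "\<dots> = (\<Sum>j=1..M-1. u j)^2"
    by (simp add: power2_eq_square sum_product sum.cartesian_product)
  finally show ?thesis .
qed

locale bseq =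
  fixes c :: "nat \<Rightarrow> real"
  assumes cpos: "\<And>m. m \<ge> 1 \<Longrightarrow> c m > 0"
    and crec: "\<And>m. m \<ge> 1 \<Longrightarrow> real (2*m+1) * c m = (if m = 1 then 1/4 else 0) + (\<Sum>j=1..m-1. c j * c (m-j))"
begin

lemma Rpos:
  assumes M: "M \<ge> 1" and x: "x > 0"
  shows "x * PP' c M x + PP c M x < x^2/4 + (PP c M x)^2"
proof -
  define u where "u j = c j * x^(2*j)" for j
  have u0: "u j \<ge> 0" if "j \<ge> 1" for j using cpos[OF that] x unfolding u_def by simp
  have "x * PP' c M x + PP c M x = (\<Sum>m=1..M. ((if m = 1 then 1/4 else 0) + (\<Sum>j=1..m-1. c j * c (m-j))) * x^(2*m))"
    unfolding PP_xderiv
  proof (intro sum.cong refl)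
    fix m assume "m \<in> {1..M}"
    hence "m \<ge> 1" by simp
    from crec[OF this] show "real (2*m+1) * c m * x^(2*m) = ((if m = 1 then 1/4 else 0) + (\<Sum>j=1..m-1. c j * c (m-j))) * x^(2*m)"
      by simp
  qed
  also have "\<dots> = (\<Sum>m=1..M. (if m = 1 then 1/4 * x^2 else 0)) + (\<Sum>m=1..M. \<Sum>j=1..m-1. u j * u (m-j))"
  proof -
    have "(\<Sum>j=1..m-1. c j * c (m-j)) * x^(2*m) = (\<Sum>j=1..m-1. u j * u (m-j))" if "m \<ge> 1" for m
    proof -
      have "(\<Sum>j=1..m-1. c j * c (m-j)) * x^(2*m) = (\<Sum>j=1..m-1. c j * c (m-j) * x^(2*m))"
        by (simp add: sum_distrib_right)
      also have "\<dots> = (\<Sum>j=1..m-1. u j * u (m-j))"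
      proof (intro sum.cong refl)
        fix j assume "j \<in> {1..m-1}"
        hence "2*m = 2*j + 2*(m-j)" by auto
        hence "x^(2*m) = x^(2*j) * x^(2*(m-j))" by (simp add: power_add)
        thus "c j * c (m-j) * x^(2*m) = u j * u (m-j)" unfolding u_def by simp
      qed
      finally show ?thesis .
    qed
    hence "(\<Sum>m=1..M. ((if m = 1 then 1/4 else 0) + (\<Sum>j=1..m-1. c j * c (m-j))) * x^(2*m))
        = (\<Sum>m=1..M. (if m = 1 then 1/4 * x^2 else 0) + (\<Sum>j=1..m-1. u j * u (m-j)))"
      by (intro sum.cong refl) (auto simp: distrib_right)
    thus ?thesis by (simp only: sum.distrib)
  qed
  also have "(\<Sum>m=1..M. (if m = 1 then 1/4 * x^2 else 0)) = x^2/4"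
    using M by (subst sum.delta) auto
  finally have e: "x * PP' c M x + PP c M x = x^2/4 + (\<Sum>m=1..M. \<Sum>j=1..m-1. u j * u (m-j))" .
  have "(\<Sum>m=1..M. \<Sum>j=1..m-1. u j * u (m-j)) \<le> (\<Sum>j=1..M-1. u j)^2"
    by (rule triangle_bound) (rule u0)
  also have "\<dots> < (PP c M x)^2"
  proof -
    have PPs: "PP c M x = (\<Sum>j=1..M-1. u j) + u M"
    proof -
      have "{1..M} = insert M {1..M-1}" using M by auto
      moreover have "M \<notin> {1..M-1}" using M by auto
      ultimately show ?thesis unfolding PP_def u_def by (simp add: add.commute)
    qed
    have "u M > 0" using cpos[OF M] x unfolding u_def by simp
    moreover have "(\<Sum>j=1..M-1. u j) \<ge> 0" by (intro sum_nonneg) (auto intro: u0)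
    ultimately show ?thesis unfolding PPs by (intro power_strict_mono) auto
  qed
  finally show ?thesis using e by simp
qed

end


context bseq begin

lemma PP_nonneg: "0 \<le> y \<Longrightarrow> PP c M y \<ge> 0"
  unfolding PP_def by (intro sum_nonneg) (auto intro!: mult_nonneg_nonneg less_imp_le[OF cpos])

lemma PP_small: assumes "0 \<le> y" "y \<le> 1" shows "PP c M y \<le> (\<Sum>m=1..M. c m) * y"
proof -
  have "PP c M y \<le> (\<Sum>m=1..M. c m * y)"
    unfolding PP_def
  proof (intro sum_mono mult_left_mono)
    fix m assume m: "m \<in> {1..M}"
    show "y^(2*m) \<le> y"
    proof -
      have "y^(2*m) \<le> y^1" using assms m by (intro power_decreasing) auto
      thus ?thesis by simp
    qed
    show "0 \<le> c m" using cpos m by (simp add: less_imp_le)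
  qed
  thus ?thesis by (simp add: sum_distrib_right)
qed

lemma D_deriv_ineq:
  assumes M: "M \<ge> 1" and y: "0 < y" "y < 2*pi"
  shows "((\<lambda>y. HH y - PP c M y) has_real_derivative (HH' y - PP' c M y)) (at y)"
    and "y * (HH' y - PP' c M y) > (HH y - PP c M y) * (HH y + PP c M y - 1)"
proof -
  have s: "sin (y/2) > 0" using y by (intro sin_gt_zero) auto
  show "((\<lambda>y. HH y - PP c M y) has_real_derivative (HH' y - PP' c M y)) (at y)"
    using HH_deriv[of y] s PP_deriv by (intro DERIV_diff) auto
  have o: "y * HH' y = HH y ^ 2 - HH y + y^2/4" using HH_ode s by simp
  have r: "y * PP' c M y + PP c M y < y^2/4 + (PP c M y)^2" using Rpos[OF M y(1)] .
  have "y * (HH' y - PP' c M y) = HH y ^ 2 - HH y + y^2/4 - y * PP' c M y" using o by (simp add: algebra_simps)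
  also have "\<dots> > HH y ^ 2 - HH y + PP c M y - (PP c M y)^2" using r by simp
  finally show "y * (HH' y - PP' c M y) > (HH y - PP c M y) * (HH y + PP c M y - 1)"
    by (simp add: algebra_simps power2_eq_square)
qed

lemma PP_lt_HH:
  assumes M: "M \<ge> 1" and x: "1 \<le> x" "x < 2*pi"
  shows "PP c M x < HH x"
proof -
  define D where "D y = HH y - PP c M y" for y
  define K where "K = (\<Sum>m=1..M. c m)"
  have K0: "K \<ge> 0" unfolding K_def by (intro sum_nonneg) (auto intro: less_imp_le[OF cpos])
  define \<delta> where "\<delta> = min 1 (1/(2*K+2))"
  have \<delta>: "0 < \<delta>" "\<delta> \<le> 1" "K * \<delta> < 1/2" using K0 unfolding \<delta>_def by (auto simp: field_simps min_def)
  have pi3: "pi > 3" by (rule pi_gt3)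
  have Dd: "(D has_real_derivative (HH' y - PP' c M y)) (at y)" if "0 < y" "y < 2*pi" for y
    unfolding D_def[abs_def] using D_deriv_ineq(1)[OF M that] .
  have Dpos_der: "HH' y - PP' c M y > 0" if "0 < y" "y \<le> \<delta>" "D y \<le> 0" for y
  proof -
    have y2: "y < 2*pi" using that \<delta> pi3 by linarith
    have "HH y < 1/2" using that \<delta> by (intro HH_small) auto
    moreover have "PP c M y \<le> K * y" using PP_small[of y] that \<delta> unfolding K_def by auto
    moreover have "K * y \<le> K * \<delta>" using that K0 by (intro mult_left_mono) auto
    ultimately have "HH y + PP c M y - 1 < 0" using \<delta> by linarith
    hence "D y * (HH y + PP c M y - 1) \<ge> 0" using that(3) by (simp add: mult_nonpos_nonpos)
    hence "y * (HH' y - PP' c M y) > 0" using D_deriv_ineq(2)[OF M that(1) y2] unfolding D_def by linarith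
    thus ?thesis using that by (simp add: zero_less_mult_iff)
  qed
  have "\<exists>a. 0 < a \<and> a < 1 \<and> D a > 0"
  proof (rule ccontr)
    assume na: "\<not> (\<exists>a. 0 < a \<and> a < 1 \<and> D a > 0)"
    define y1 where "y1 = \<delta>/2"
    have y1: "0 < y1" "y1 < 1" "y1 \<le> \<delta>" using \<delta> unfolding y1_def by auto
    have Dle: "D y \<le> 0" if "0 < y" "y \<le> y1" for y
    proof -
      have "y < 1" using that y1 by linarith
      thus ?thesis using na that by (meson not_less)
    qed
    have inc: "D z < D w" if "0 < z" "z < w" "w \<le> y1" for z w
    proof (rule DERIV_pos_imp_increasing[OF that(2)])
      fix t assume t: "z \<le> t" "t \<le> w"
      have "0 < t" "t \<le> \<delta>" "D t \<le> 0" using t that y1 Dle[of t] by auto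
      moreover have "t < 2*pi" using \<open>t \<le> \<delta>\<close> \<delta> pi3 by linarith
      ultimately show "\<exists>d. (D has_real_derivative d) (at t) \<and> 0 < d" using Dd Dpos_der by blast
    qed
    define w where "w = y1/2"
    have w: "0 < w" "w < y1" using y1 unfolding w_def by auto
    have Dw: "D w < 0" using inc[OF w(1,2) order_refl] Dle[OF y1(1) order_refl] by simp
    define \<eta> where "\<eta> = - D w"
    have \<eta>: "\<eta> > 0" using Dw unfolding \<eta>_def by simp
    define z where "z = min (w/2) (\<eta>/(K+1))"
    have z: "0 < z" "z < w" "z \<le> \<eta>/(K+1)" using w \<eta> K0 unfolding z_def by auto
    have "PP c M z \<le> K * z" using PP_small[of z] z w y1 unfolding K_def by auto
    also have "\<dots> \<le> K * (\<eta>/(K+1))" using z K0 by (intro mult_left_mono) auto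
    also have "\<dots> < \<eta>" using \<eta> K0 by (simp add: field_simps)
    finally have "PP c M z < \<eta>" .
    moreover have "HH z \<ge> 0" using z w y1 pi3 by (intro HH_nonneg) auto
    ultimately have "D z > D w" unfolding D_def \<eta>_def by simp
    moreover have "D z < D w" using inc[OF z(1,2)] w by simp
    ultimately show False by simp
  qed
  then obtain a where a: "0 < a" "a < 1" "D a > 0" by blast
  have "D x > 0"
  proof (rule cross[of a x D])
    show "a < x" using a x by simp
    show "continuous_on {a..x} D"
    proof (intro continuous_at_imp_continuous_on ballI)
      fix y assume "y \<in> {a..x}"
      hence "0 < y" "y < 2*pi" using a x by auto
      thus "isCont D y" using Dd by (blast intro: DERIV_isCont)
    qed
    show "D a > 0" by (rule a)
    fix y assume y: "a < y" "y \<le> x" "D y = 0"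
    hence y': "0 < y" "y < 2*pi" using a x by auto
    have "y * (HH' y - PP' c M y) > 0" using D_deriv_ineq(2)[OF M y'] y(3) unfolding D_def by simp
    hence "HH' y - PP' c M y > 0" using y' by (simp add: zero_less_mult_iff)
    thus "\<exists>d>0. (D has_real_derivative d) (at y)" using Dd[OF y'] by blast
  qed
  thus ?thesis unfolding D_def by simp
qed

end


interpretation bbs: bseq bb
proof
  fix m :: nat assume "m \<ge> 1"
  thus "bb m > 0" by (rule bb_pos)
  show "real (2*m+1) * bb m = (if m = 1 then 1/4 else 0) + (\<Sum>j=1..m-1. bb j * bb (m-j))"
    by (rule bb_rec) fact
qed

lemma exp_bound: "(1 + 1/real n)^n \<le> 3"
proof -
  show ?thesis
  proof (cases "n = 0")
    case True thus ?thesis by simp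
  next
    case False
  have "(1 + 1/real n)^n \<le> (exp (1/real n))^n"
    by (intro power_mono) (auto simp: exp_ge_add_one_self)
  also have "\<dots> = exp (real n * (1/real n))" by (rule exp_of_nat_mult[symmetric])
  also have "\<dots> = exp 1" using False by simp
  also have "\<dots> \<le> 3" by (rule exp_le)
  finally show ?thesis .
  qed
qed

lemma bb_bound: assumes M: "M \<ge> 1" shows "bb M \<le> 3 * real (2*M+1) / (2*pi)^(2*M)"
proof -
  define e where "e = 1 / real (2*M+1)"
  have e: "0 < e" "e \<le> 1/2" using M unfolding e_def by (auto simp: field_simps)
  define x where "x = 2*pi*(1-e)"
  have pi3: "pi > 3" by (rule pi_gt3)
  have e3: "e \<le> 1/3" using M unfolding e_def by (auto simp: field_simps)
  have "pi * e \<le> pi * (1/3)" using e3 pi3 by (intro mult_left_mono) auto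
  moreover have "x = 2*pi - 2*(pi*e)" by (simp add: x_def algebra_simps)
  ultimately have x1: "1 \<le> x" using pi3 by linarith
  have x2: "x < 2*pi" unfolding x_def using e pi3 by simp
  have xpos: "x > 0" using x1 by simp
  have "bb M * x^(2*M) \<le> PP bb M x"
    unfolding PP_def using M xpos
    by (intro member_le_sum) (auto intro!: mult_nonneg_nonneg less_imp_le[OF bb_pos])
  also have "\<dots> < HH x" using bbs.PP_lt_HH[OF M x1 x2] .
  also have "\<dots> \<le> 1/e" unfolding x_def by (rule HH_end[OF e])
  also have "\<dots> = real (2*M+1)" unfolding e_def by simp
  finally have b1: "bb M * x^(2*M) < real (2*M+1)" .
  have xe: "x = 2*pi / (1 + 1/real (2*M))"
    unfolding x_def e_def using M by (simp add: field_simps)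
  have "(2*pi)^(2*M) = x^(2*M) * (1 + 1/real (2*M))^(2*M)"
  proof -
    have "1 + 1/real (2*M) > 0" by (simp add: add_pos_nonneg)
    thus ?thesis unfolding xe by (simp add: power_divide)
  qed
  also have "\<dots> \<le> x^(2*M) * 3" using exp_bound[of "2*M"] xpos by (intro mult_left_mono) auto
  finally have b2: "(2*pi)^(2*M) \<le> 3 * x^(2*M)" by simp
  have "bb M * (2*pi)^(2*M) \<le> bb M * (3 * x^(2*M))"
    using b2 bb_pos[OF M] by (intro mult_left_mono) auto
  also have "\<dots> \<le> 3 * real (2*M+1)" using b1 by simp
  finally show ?thesis by (simp add: field_simps)
qed

lemma genocchi_bound: assumes k: "k \<ge> 1" shows "\<bar>genocchi k\<bar> \<le> 6 * fact (k+1) / pi^k"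
proof -
  have pi3: "pi > 3" by (rule pi_gt3)
  have pi4: "pi < 4" by (rule pi_less_4)
  show ?thesis
  proof (cases "even k")
    case True
    then obtain M where kM: "k = 2*M" by blast
    hence M: "M \<ge> 1" using k by simp
    have "\<bar>genocchi k\<bar> = 2 * (4^M - 1) * fact (2*M) * bb M"
    proof -
      have "\<bar>genocchi k\<bar> = 2 * \<bar>1 - 2^(2*M)\<bar> * (fact (2*M) * \<bar>ba (2*M)\<bar>)"
        unfolding genocchi_def bernoulli_BA kM by (simp add: abs_mult)
      also have "\<bar>1 - (2::real)^(2*M)\<bar> = 4^M - 1"
      proof -
        have "(2::real)^(2*M) = 4^M" by (simp add: power_mult)
        moreover have "(4::real)^M \<ge> 1" by simp
        ultimately show ?thesis by simp
      qed
      finally show ?thesis using abs_ba_even[OF M] by simp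
    qed
    also have "\<dots> \<le> 2 * 4^M * fact (2*M) * (3 * real (2*M+1) / (2*pi)^(2*M))"
      using bb_bound[OF M] bb_pos[OF M] by (intro mult_mono) auto
    also have "\<dots> = 6 * fact (k+1) / pi^k"
    proof -
      have "(2*pi)^(2*M) = 4^M * pi^(2*M)" by (simp add: power_mult_distrib power_mult)
      moreover have "fact (2*M+1) = real (2*M+1) * fact (2*M)" by simp
      ultimately show ?thesis unfolding kM by (simp add: field_simps)
    qed
    finally show ?thesis .
  next
    case False
    show ?thesis
    proof (cases "k = 1")
      case True
      have "genocchi 1 = 1" unfolding genocchi_def bernoulli_BA using ba1 by simp
      moreover have "6 * fact 2 / pi \<ge> 1" using pi4 by (simp add: field_simps)
      ultimately show ?thesis using True by simp
    next
      case k1: False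
      have "genocchi k = 0" unfolding genocchi_def bernoulli_BA using ba_odd[OF False k1] by simp
      thus ?thesis by simp
    qed
  qed
qed


lemma fallf: "real (n choose k) * fact k = (\<Prod>i<k. real n - real i)"
proof -
  have "real (n choose k) * fact k = (real n gchoose k) * fact k" by (simp add: binomial_gbinomial)
  also have "\<dots> = (\<Prod>i=0..<k. real n - real i)" by (rule gbinomial_mult_fact')
  finally show ?thesis by (simp add: atLeast0LessThan)
qed

lemma pi_le: "pi \<le> 16/5"
  using pi_approx(2) by simp

lemma prod_split5:
  assumes "5 \<le> k" "k \<le> n"
  shows "(\<Prod>i<k. real n - real i) \<le> (\<Prod>i<5. real n - real i) * real n ^ (k - 5)"
proof -
  have "{..<k} = {..<5} \<union> {5..<k}" using assms by auto
  hence "(\<Prod>i<k. real n - real i) = (\<Prod>i<5. real n - real i) * (\<Prod>i\<in>{5..<k}. real n - real i)"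
    by (simp add: prod.union_disjoint ivl_disj_int)
  also have "\<dots> \<le> (\<Prod>i<5. real n - real i) * real n ^ (k - 5)"
  proof (rule mult_left_mono)
    have "(\<Prod>i\<in>{5..<k}. real n - real i) \<le> (\<Prod>i\<in>{5..<k}. real n)"
      using assms by (intro prod_mono) auto
    thus "(\<Prod>i\<in>{5..<k}. real n - real i) \<le> real n ^ (k - 5)" by simp
    show "0 \<le> (\<Prod>i<5. real n - real i)" using assms by (intro prod_nonneg) auto
  qed
  finally show ?thesis .
qed

definition TT :: "nat \<Rightarrow> nat \<Rightarrow> real" where
  "TT n s = (\<Sum>i=1..s. real (n choose i) * fact (i+1) * pi^(s+1-i))"

lemma TT_Suc: "s \<ge> 1 \<Longrightarrow> TT n (Suc s) = pi * TT n s + real (n choose (s+1)) * fact (s+2) * pi"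
proof -
  assume s: "s \<ge> 1"
  have "TT n (Suc s) = (\<Sum>i=1..s. real (n choose i) * fact (i+1) * pi^(s+2-i)) + real (n choose (s+1)) * fact (s+2) * pi"
    unfolding TT_def using s by (simp add: add.commute)
  also have "(\<Sum>i=1..s. real (n choose i) * fact (i+1) * pi^(s+2-i)) = pi * TT n s"
    unfolding TT_def sum_distrib_left
  proof (intro sum.cong refl)
    fix i assume "i \<in> {1..s}"
    hence "s+2-i = Suc (s+1-i)" by auto
    thus "real (n choose i) * fact (i+1) * pi^(s+2-i) = pi * (real (n choose i) * fact (i+1) * pi^(s+1-i))"
      by simp
  qed
  finally show ?thesis .
qed

lemma TT4: assumes n: "n \<ge> 4" shows "TT n 4 \<le> 9/2 * real n ^ 5"
proof -
  have f2: "real (n choose 2) * 2 = real n * (real n - 1)"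
    using fallf[of n 2] by (simp add: numeral_eq_Suc lessThan_Suc)
  have f3: "real (n choose 3) * 6 = real n * (real n - 1) * (real n - 2)"
    using fallf[of n 3] by (simp add: numeral_eq_Suc lessThan_Suc algebra_simps)
  have f4: "real (n choose 4) * 24 = real n * (real n - 1) * (real n - 2) * (real n - 3)"
    using fallf[of n 4] by (simp add: numeral_eq_Suc lessThan_Suc algebra_simps)
  have "TT n 4 = real (n choose 1) * 2 * pi^4 + (real (n choose 2) * 2) * 3 * pi^3
      + (real (n choose 3) * 6) * 4 * pi^2 + (real (n choose 4) * 24) * 5 * pi"
    unfolding TT_def by (simp add: numeral_eq_Suc algebra_simps)
  also have "\<dots> = 2 * real n * pi^4 + 3 * (real n * (real n - 1)) * pi^3
      + 4 * (real n * (real n - 1) * (real n - 2)) * pi^2 + 5 * (real n * (real n - 1) * (real n - 2) * (real n - 3)) * pi"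
    unfolding f2 f3 f4 by simp
  also have "\<dots> \<le> 9/2 * real n ^ 5"
  proof -
    define t where "t = real n - 4"
    have t: "t \<ge> 0" using n unfolding t_def by simp
    have nt: "real n = t + 4" unfolding t_def by simp
    have p: "0 \<le> pi" "pi \<le> 16/5" using pi_le by auto
    have p2: "pi^2 \<le> (16/5)^2" using p by (intro power_mono) auto
    have p3: "pi^3 \<le> (16/5)^3" using p by (intro power_mono) auto
    have p4: "pi^4 \<le> (16/5)^4" using p by (intro power_mono) auto
    have "2 * real n * pi^4 \<le> 2 * real n * (16/5)^4" using p4 n by (intro mult_left_mono) auto
    moreover have "3 * (real n * (real n - 1)) * pi^3 \<le> 3 * (real n * (real n - 1)) * (16/5)^3"
      using p3 n by (intro mult_left_mono) auto
    moreover have "4 * (real n * (real n - 1) * (real n - 2)) * pi^2 \<le> 4 * (real n * (real n - 1) * (real n - 2)) * (16/5)^2"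
      using p2 n by (intro mult_left_mono) auto
    moreover have "5 * (real n * (real n - 1) * (real n - 2) * (real n - 3)) * pi \<le> 5 * (real n * (real n - 1) * (real n - 2) * (real n - 3)) * (16/5)"
      using p n by (intro mult_left_mono) auto
    moreover have "2 * real n * (16/5)^4 + 3 * (real n * (real n - 1)) * (16/5)^3
      + 4 * (real n * (real n - 1) * (real n - 2)) * (16/5)^2 + 5 * (real n * (real n - 1) * (real n - 2) * (real n - 3)) * (16/5)
      \<le> 9/2 * real n ^ 5"
    proof -
      have "9/2 * real n ^ 5 - (2 * real n * (16/5)^4 + 3 * (real n * (real n - 1)) * (16/5)^3
      + 4 * (real n * (real n - 1) * (real n - 2)) * (16/5)^2 + 5 * (real n * (real n - 1) * (real n - 2) * (real n - 3)) * (16/5))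
        = real n * (191008/625 + 84112/125 * t + 7376/25 * t^2 + 56 * t^3 + 9/2 * t^4)"
        unfolding nt by (simp add: eval_nat_numeral) algebra
      also have "\<dots> \<ge> 0" using t n by (intro mult_nonneg_nonneg add_nonneg_nonneg) auto
      finally show ?thesis by simp
    qed
    ultimately show ?thesis by linarith
  qed
  finally show ?thesis .
qed



lemma step_ineq:
  assumes s: "4 \<le> s" "s + 1 \<le> n"
  shows "real (n choose (s+1)) * fact (s+2) * pi \<le> 9/2 * (real n - pi) * real n^(s+1)"
proof -
  have n5: "real n \<ge> 5" using s by simp
  have p: "pi \<le> 16/5" "pi > 3" using pi_le pi_gt3 by auto
  define Q where "Q = real n * (real n - 1) * (real n - 2) * (real n - 3) * (real n - 4)"
  have "real (n choose (s+1)) * fact (s+2) = real (s+2) * (real (n choose (s+1)) * fact (s+1))"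
    by (simp add: algebra_simps)
  also have "real (n choose (s+1)) * fact (s+1) \<le> Q * real n ^ (s - 4)"
  proof -
    have "real (n choose (s+1)) * fact (s+1) = (\<Prod>i<s+1. real n - real i)" by (rule fallf)
    also have "\<dots> \<le> (\<Prod>i<5. real n - real i) * real n ^ (s + 1 - 5)" using s by (intro prod_split5) auto
    also have "(\<Prod>i<5. real n - real i) = Q" unfolding Q_def by (simp add: numeral_eq_Suc lessThan_Suc algebra_simps)
    also have "s + 1 - 5 = s - 4" by simp
    finally show ?thesis .
  qed
  hence "real (s+2) * (real (n choose (s+1)) * fact (s+1)) \<le> real (s+2) * (Q * real n ^ (s - 4))"
    by (intro mult_left_mono) auto
  finally have A0: "real (n choose (s+1)) * fact (s+2) \<le> real (s+2) * (Q * real n ^ (s - 4))" .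
  have A: "real (n choose (s+1)) * fact (s+2) * pi \<le> pi * real (s+2) * Q * real n ^ (s - 4)"
    using mult_right_mono[OF A0, of pi] p by (simp add: mult_ac)
  have B: "pi * real (s+2) * Q \<le> 9/2 * (real n - pi) * real n^5"
  proof -
    have a: "(real n + 1) * (real n - 1) \<le> real n * real n" by (simp add: algebra_simps)
    have b: "(real n - 2) * (real n - 3) \<le> real n * (real n - pi)"
    proof -
      have "9/5 * real n \<ge> 6" using n5 by simp
      moreover have "pi * real n \<le> 16/5 * real n" using p n5 by (intro mult_right_mono) auto
      ultimately have "pi * real n \<le> 5 * real n - 6" by linarith
      thus ?thesis by (simp add: algebra_simps)
    qed
    have c: "real n - 4 \<le> real n" by simp
    have s2: "real (s+2) \<le> real n + 1" using s by simp
    have "pi * real (s+2) * Q = pi * (real (s+2) * (real n - 1)) * ((real n - 2) * (real n - 3)) * (real n - 4) * real n"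
      unfolding Q_def by (simp add: algebra_simps)
    also have "\<dots> \<le> (9/2) * ((real n + 1) * (real n - 1)) * (real n * (real n - pi)) * real n * real n"
    proof -
      have f1: "real (s+2) * (real n - 1) \<le> (real n + 1) * (real n - 1)"
        using s2 n5 by (intro mult_right_mono) auto
      have X1: "pi * (real (s+2) * (real n - 1)) \<le> (9/2) * ((real n + 1) * (real n - 1))"
        using f1 p n5 by (intro mult_mono) auto
      have X2: "pi * (real (s+2) * (real n - 1)) * ((real n - 2) * (real n - 3)) \<le> (9/2) * ((real n + 1) * (real n - 1)) * (real n * (real n - pi))"
        by (rule mult_mono[OF X1 b]) (use n5 in \<open>auto intro!: mult_nonneg_nonneg\<close>)
      have X3: "pi * (real (s+2) * (real n - 1)) * ((real n - 2) * (real n - 3)) * (real n - 4) \<le> (9/2) * ((real n + 1) * (real n - 1)) * (real n * (real n - pi)) * real n"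
        by (rule mult_mono[OF X2]) (use n5 p in \<open>auto intro!: mult_nonneg_nonneg\<close>)
      show ?thesis using X3 n5 by (intro mult_right_mono) auto
    qed
    also have "\<dots> \<le> (9/2) * (real n * real n) * (real n * (real n - pi)) * real n * real n"
      using p n5 a by (intro mult_right_mono mult_left_mono mult_nonneg_nonneg) auto
    also have "\<dots> = 9/2 * (real n - pi) * real n^5" by (simp add: algebra_simps eval_nat_numeral)
    finally show ?thesis .
  qed
  have "pi * real (s+2) * Q * real n ^ (s - 4) \<le> 9/2 * (real n - pi) * real n^5 * real n ^ (s - 4)"
    using B by (intro mult_right_mono) auto
  also have "\<dots> = 9/2 * (real n - pi) * real n^(s+1)"
  proof -
    have "s + 1 = 5 + (s - 4)" using s by simp
    hence "real n ^ (s+1) = real n^5 * real n ^ (s - 4)" by (metis power_add)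
    thus ?thesis by simp
  qed
  finally have C: "pi * real (s+2) * Q * real n ^ (s - 4) \<le> 9/2 * (real n - pi) * real n^(s+1)" .
  show ?thesis using A C by (rule order_trans)
qed

lemma TT_bound: assumes "4 \<le> s" "s \<le> n" shows "TT n s \<le> 9/2 * real n ^ (s+1)"
  using assms(1,2)
proof (induction s rule: dec_induct)
  case base thus ?case using TT4 by simp
next
  case (step m)
  have "TT n (Suc m) = pi * TT n m + real (n choose (m+1)) * fact (m+2) * pi"
    using step by (intro TT_Suc) auto
  also have "\<dots> \<le> pi * (9/2 * real n ^ (m+1)) + 9/2 * (real n - pi) * real n^(m+1)"
    using step step_ineq[of m n] by (intro add_mono mult_left_mono) auto
  also have "\<dots> = 9/2 * real n ^ (Suc m + 1)" by (simp add: field_simps)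
  finally show ?case .
qed


theorem mainTheorem5:
  fixes n s p j :: nat
  assumes "4 \<le> s" and "s \<le> n" and "prime p" and "odd p" and "j < p"
  shows "\<bar>F_poly n s p (real j)\<bar> \<le> 3 * (real n * real p / pi) ^ (s + 1)"
proof -
  have p3: "p \<ge> 3"
  proof -
    have "p \<ge> 2" using assms(3) prime_ge_2_nat by blast
    moreover have "p \<noteq> 2" using assms(4) by auto
    ultimately show ?thesis by simp
  qed
  have pipos: "pi > 0" by (rule pi_gt_zero)
  define c where "c = 6 * real p ^ (s-1) / pi^(s+1)"
  have "\<bar>F_poly n s p (real j)\<bar> \<le> (\<Sum>k=0..s-1. \<bar>real (n choose (k+1)) * genocchi (k+1) * real p ^ k * real j ^ (s-1-k)\<bar>)"
    unfolding F_poly_def by (rule sum_abs)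
  also have "\<dots> \<le> (\<Sum>k=0..s-1. c * (real (n choose (k+1)) * fact (k+1+1) * pi^(s+1-(k+1))))"
  proof (intro sum_mono)
    fix k assume k: "k \<in> {0..s-1}"
    have "\<bar>real (n choose (k+1)) * genocchi (k+1) * real p ^ k * real j ^ (s-1-k)\<bar>
        = real (n choose (k+1)) * \<bar>genocchi (k+1)\<bar> * real p ^ k * real j ^ (s-1-k)"
      by (simp add: abs_mult)
    also have "\<dots> \<le> real (n choose (k+1)) * (6 * fact (k+1+1) / pi^(k+1)) * real p ^ k * real p ^ (s-1-k)"
    proof (intro mult_mono mult_left_mono mult_nonneg_nonneg power_mono)
      show "\<bar>genocchi (k+1)\<bar> \<le> 6 * fact (k+1+1) / pi^(k+1)" by (rule genocchi_bound) simp
      show "real j \<le> real p" using assms(5) by simp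
    qed (use pipos in auto)
    also have "\<dots> = c * (real (n choose (k+1)) * fact (k+1+1) * pi^(s+1-(k+1)))"
    proof -
      have e1: "real p ^ k * real p ^ (s-1-k) = real p ^ (s-1)"
        using k assms(1) by (simp add: power_add[symmetric])
      have e2: "pi^(s+1) = pi^(k+1) * pi^(s+1-(k+1))"
        using k assms(1) by (simp add: power_add[symmetric])
      define Fk :: real where "Fk = fact (k+1+1)"
      define u where "u = pi^(k+1)"
      define v where "v = pi^(s+1-(k+1))"
      define A where "A = real (n choose (k+1))"
      have uv: "u > 0" "v > 0" unfolding u_def v_def using pipos by auto
      have "A * (6 * Fk / u) * real p ^ k * real p ^ (s-1-k) = (6 * real p ^ (s-1) / (u * v)) * (A * Fk * v)"
        using uv e1 by (simp add: field_simps)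
      thus ?thesis unfolding c_def e2 Fk_def[symmetric] u_def[symmetric] v_def[symmetric] A_def[symmetric] .
    qed
    finally show "\<bar>real (n choose (k+1)) * genocchi (k+1) * real p ^ k * real j ^ (s-1-k)\<bar>
        \<le> c * (real (n choose (k+1)) * fact (k+1+1) * pi^(s+1-(k+1)))" .
  qed
  also have "\<dots> = c * TT n s"
  proof -
    have "(\<Sum>k=0..s-1. real (n choose (k+1)) * fact (k+1+1) * pi^(s+1-(k+1))) = TT n s"
    proof -
      have "TT n s = (\<Sum>i=Suc 0..Suc (s-1). real (n choose i) * fact (i+1) * pi^(s+1-i))"
        unfolding TT_def using assms(1) by simp
      also have "\<dots> = (\<Sum>k=0..s-1. real (n choose (Suc k)) * fact (Suc k+1) * pi^(s+1-Suc k))"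
        by (rule sum.shift_bounds_cl_Suc_ivl)
      finally show ?thesis by simp
    qed
    thus ?thesis by (metis (no_types) sum_distrib_left)
  qed
  also have "\<dots> \<le> c * (9/2 * real n ^ (s+1))"
    using TT_bound[OF assms(1,2)] pipos unfolding c_def by (intro mult_left_mono) auto
  also have "\<dots> \<le> 3 * (real n * real p / pi) ^ (s + 1)"
  proof -
    have "s+1 = (s-1) + 2" using assms(1) by simp
    hence ps: "real p ^ (s+1) = real p ^ (s-1) * (real p)^2" by (metis power_add)
    have "(3::real)^2 \<le> (real p)^2" using p3 by (intro power_mono) auto
    hence "(9::real) \<le> (real p)^2" by simp
    hence "9 * real p ^ (s-1) \<le> (real p)^2 * real p ^ (s-1)" by (intro mult_right_mono) auto
    hence "27 * real p ^ (s-1) \<le> 3 * real p ^ (s+1)" unfolding ps by simp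
    hence "27 * real p ^ (s-1) * real n ^ (s+1) / pi ^ (s+1) \<le> 3 * real p ^ (s+1) * real n ^ (s+1) / pi ^ (s+1)"
      using pipos by (intro divide_right_mono mult_right_mono) auto
    thus ?thesis unfolding c_def by (simp add: power_mult_distrib power_divide field_simps)
  qed
  finally show ?thesis .
qed


end
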